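(* For all $x\in\left[0,\frac{\pi_{6/5,3/2}}{4}\right)$, $$\sin_{6/5,3/2}(2x)=(\Theta\circ\Phi\circ\Psi)(\cos_{6/5,3/2}x),$$ where $$\Theta(x)=\left(\frac{2x}{1+x}\right)^{2/3},\qquad \Phi(x)=\frac{8\sqrt{x(3x+1)^3(1-x)}}{16x+(3x+1)^3(1-x)},\qquad \Psi(x)=\frac{2x^{3/5}}{1+x^{6/5}}.$$
   Context: For $0<q<\infty$ and $\frac{q}{q+1}<p<\infty$: let $F_{p,q}(y)=\int_0^y (1-t^q)^{-1/p}\,dt$ for $y\in[0,1)$ and $\pi_{p,q}=2\int_0^1(1-t^q)^{-1/p}\,dt$. The function $\sin_{p,q}:[0,\pi_{p,q}/2)\to[0,1)$ is the inverse of $F_{p,q}$ and $\cos_{p,q}x=\frac{d}{dx}\sin_{p,q}x$. Here $(p,q)=(6/5,3/2)$, so $\pi_{6/5,3/2}=2\int_0^1(1-t^{3/2})^{-5/6}\,dt<\infty$. *)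

theory Defs
  imports "HOL-Analysis.Analysis"
begin

definition F_pq :: "real \<Rightarrow> real \<Rightarrow> real \<Rightarrow> real" where
  "F_pq p q y = integral {0..y} (\<lambda>t. (1 - t powr q) powr (-1/p))"

definition pi_pq :: "real \<Rightarrow> real \<Rightarrow> real" where
  "pi_pq p q = 2 * integral {0..1} (\<lambda>t. (1 - t powr q) powr (-1/p))"

definition sin_pq :: "real \<Rightarrow> real \<Rightarrow> real \<Rightarrow> real" where
  "sin_pq p q x = (THE y. y \<in> {0..<1} \<and> F_pq p q y = x)"

definition cos_pq :: "real \<Rightarrow> real \<Rightarrow> real \<Rightarrow> real" where
  "cos_pq p q x = (THE c. (sin_pq p q has_real_derivative c)
                          (at x within {0..<pi_pq p q / 2}))"

definition Theta :: "real \<Rightarrow> real" where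
  "Theta x = (2 * x / (1 + x)) powr (2/3)"

definition Phi :: "real \<Rightarrow> real" where
  "Phi x = 8 * sqrt (x * (3*x + 1)^3 * (1 - x)) / (16 * x + (3*x + 1)^3 * (1 - x))"

definition Psi :: "real \<Rightarrow> real" where
  "Psi x = 2 * x powr (3/5) / (1 + x powr (6/5))"

end

theory Submission
  imports Defs
begin

definition ff :: "real \<Rightarrow> real" where
  "ff t = (1 - t powr (3/2)) powr (-5/6)"

definition FF :: "real \<Rightarrow> real" where
  "FF y = integral {0..y} ff"

lemma F_pq_eq: "F_pq (6/5) (3/2) y = FF y"
proof -
  have "(\<lambda>t. (1 - t powr (3/2)) powr (-1/(6/5))) = ff"
    by (auto simp: ff_def)
  then show ?thesis by (simp add: F_pq_def FF_def)
qed

lemma pi_pq_eq: "pi_pq (6/5) (3/2) = 2 * FF 1"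
proof -
  have "(\<lambda>t. (1 - t powr (3/2)) powr (-1/(6/5))) = ff"
    by (auto simp: ff_def)
  then show ?thesis by (simp add: pi_pq_def FF_def)
qed

lemma pw_lt1: "0 \<le> t \<Longrightarrow> t < 1 \<Longrightarrow> t powr (3/2) < (1::real)"
  using powr_less_mono2[of "3/2" t 1] by simp

lemma pw_le_t: "0 \<le> t \<Longrightarrow> t \<le> 1 \<Longrightarrow> t powr (3/2) \<le> (t::real)"
  using powr_mono'[of 1 "3/2" t] by simp

lemma ff_cont: "continuous_on {0..<1} ff"
proof -
  have c1: "continuous_on {0..<1} (\<lambda>x::real. x powr (3/2))"
    by (intro continuous_on_powr' continuous_intros) auto
  have c2: "continuous_on {0..<1} (\<lambda>x::real. 1 - x powr (3/2))"
    by (intro continuous_intros c1)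
  show ?thesis unfolding ff_def
    by (rule continuous_on_powr[OF c2 continuous_on_const]) (use pw_lt1 in fastforce)
qed

lemma ff_pos: "0 \<le> t \<Longrightarrow> t < 1 \<Longrightarrow> 0 < ff t"
  unfolding ff_def using pw_lt1[of t] by simp

lemma g_integral: "((\<lambda>t. (1 - t) powr (-5/6)) has_integral (0 - (-6 * (1 - 0) powr (1/6)))) {0..1::real}"
proof -
  have "((\<lambda>t. (1 - t) powr (-5/6)) has_integral ((\<lambda>t. -6 * (1 - t) powr (1/6)) 1 - (\<lambda>t. -6 * (1 - t) powr (1/6)) 0)) {0..1::real}"
  proof (rule fundamental_theorem_of_calculus_interior)
    show "continuous_on {0..1::real} (\<lambda>t. -6 * (1 - t) powr (1/6))"
      by (intro continuous_on_powr' continuous_intros) auto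
    fix x :: real assume x: "x \<in> {0<..<1}"
    have "((\<lambda>t. -6 * (1 - t) powr (1/6)) has_real_derivative (1 - x) powr (-5/6)) (at x)"
      using x apply - by (rule derivative_eq_intros refl | simp)+
    then show "((\<lambda>t. -6 * (1 - t) powr (1/6)) has_vector_derivative (1 - x) powr (-5/6)) (at x)"
      by (simp add: has_real_derivative_iff_has_vector_derivative[symmetric])
  qed auto
  then show ?thesis by simp
qed

lemma sd01: "negligible (sym_diff {0..<1::real} {0..1})"
proof -
  have e: "sym_diff {0..<1::real} {0..1} = {1}" by auto
  show ?thesis unfolding e by simp
qed

lemma ff_integrable: "ff integrable_on {0..1}"
proof -
  have gi: "(\<lambda>t. (1 - t) powr (-5/6)) integrable_on {0..1::real}"
    using g_integral by blast
  have gi': "(\<lambda>t. (1 - t) powr (-5/6)) integrable_on {0..<1::real}"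
    using gi integrable_spike_set_eq[OF sd01] by blast
  have "ff integrable_on {0..<1}"
  proof (rule measurable_bounded_by_integrable_imp_integrable_real[OF _ gi'])
    show "ff \<in> borel_measurable (lebesgue_on {0..<1})"
      by (rule continuous_imp_measurable_on_sets_lebesgue[OF ff_cont]) auto
    show "{0..<1::real} \<in> sets lebesgue" by auto
    fix t :: real assume t: "t \<in> {0..<1}"
    have "1 - t \<le> 1 - t powr (3/2)" using pw_le_t[of t] t by auto
    moreover have "0 < 1 - t" using t by auto
    ultimately have "(1 - t powr (3/2)) powr (-5/6) \<le> (1 - t) powr (-5/6)"
      by (intro powr_mono2') auto
    then show "\<bar>ff t\<bar> \<le> (1 - t) powr (-5/6)"
      using ff_pos[of t] t by (simp add: ff_def)
  qed
  then show ?thesis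
    using integrable_spike_set_eq[OF sd01] by blast
qed

lemma FF_cont: "continuous_on {0..1} FF"
  unfolding FF_def by (rule indefinite_integral_continuous_1[OF ff_integrable])

lemma FF0: "FF 0 = 0" by (simp add: FF_def)

lemma ff_cont_Icc: "b < 1 \<Longrightarrow> continuous_on {0..b} ff"
  by (rule continuous_on_subset[OF ff_cont]) auto

lemma FF_deriv_within_Icc:
  assumes "0 \<le> s" "s \<le> b" "b < 1"
  shows "(FF has_real_derivative ff s) (at s within {0..b})"
  using integral_has_vector_derivative[OF ff_cont_Icc[OF assms(3)], of s] assms
  unfolding FF_def has_real_derivative_iff_has_vector_derivative by auto

lemma FF_deriv_at:
  assumes "0 < s" "s < 1"
  shows "(FF has_real_derivative ff s) (at s)"
proof -
  have "(FF has_real_derivative ff s) (at s within {0..(1+s)/2})"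
    using assms by (intro FF_deriv_within_Icc) auto
  moreover have "at s within {0..(1+s)/2} = at s"
    using assms by (intro at_within_Icc_at) auto
  ultimately show ?thesis by simp
qed

lemma FF_deriv_within:
  assumes "0 \<le> s" "s < 1"
  shows "(FF has_real_derivative ff s) (at s within {0..<1})"
proof -
  have "(FF has_real_derivative ff s) (at s within {0..(1+s)/2})"
    using assms by (intro FF_deriv_within_Icc) auto
  moreover have "at s within {0..<1} = at s within {0..(1+s)/2}"
    using assms by (intro at_within_nhd[of _ "{-1<..<(1+s)/2}"]) auto
  ultimately show ?thesis by simp
qed

lemma FF_mono:
  assumes "0 \<le> a" "a < b" "b \<le> 1"
  shows "FF a < FF b"
proof (rule DERIV_pos_imp_increasing_open[OF assms(2)])
  fix x assume "a < x" "x < b"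
  then show "\<exists>y. (FF has_real_derivative y) (at x) \<and> 0 < y"
    using assms FF_deriv_at[of x] ff_pos[of x] by (intro exI[of _ "ff x"]) auto
next
  show "continuous_on {a..b} FF"
    by (rule continuous_on_subset[OF FF_cont]) (use assms in auto)
qed

lemma FF_mono_le:
  assumes "0 \<le> a" "a \<le> b" "b \<le> 1"
  shows "FF a \<le> FF b"
  using FF_mono[of a b] assms by (cases "a = b") auto

lemma FF_inj:
  assumes "0 \<le> a" "a \<le> 1" "0 \<le> b" "b \<le> 1" "FF a = FF b"
  shows "a = b"
  using FF_mono[of a b] FF_mono[of b a] assms by (cases a b rule: linorder_cases) auto

lemma FF1_pos: "0 < FF 1"
  using FF_mono[of 0 1] FF0 by simp

lemma FF_surj:
  assumes "0 \<le> y" "y < FF 1"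
  shows "\<exists>s. 0 \<le> s \<and> s < 1 \<and> FF s = y"
proof -
  obtain s where s: "0 \<le> s" "s \<le> 1" "FF s = y"
    using IVT'[of FF 0 y 1] FF_cont assms FF0 by auto
  then have "s \<noteq> 1" using assms by auto
  then show ?thesis using s by auto
qed

lemma sin_eq:
  assumes "0 \<le> s" "s < 1"
  shows "sin_pq (6/5) (3/2) (FF s) = s"
  unfolding sin_pq_def F_pq_eq
proof (rule the_equality)
  show "s \<in> {0..<1} \<and> FF s = FF s" using assms by auto
  fix y assume "y \<in> {0..<1} \<and> FF y = FF s"
  then show "y = s" using FF_inj[of y s] assms by auto
qed

lemma FF_image: "FF ` {0..<1} = {0..<FF 1}"
proof
  show "FF ` {0..<1} \<subseteq> {0..<FF 1}"
    using FF_mono_le[of 0] FF0 FF_mono[of _ 1] by force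
  show "{0..<FF 1} \<subseteq> FF ` {0..<1}"
    using FF_surj by force
qed

lemma sin_cont:
  "continuous_on (FF ` {0..<1}) (sin_pq (6/5) (3/2))"
proof -
  define g2 where "g2 y = (if y = FF 1 then 1 else sin_pq (6/5) (3/2) y)" for y
  have "\<forall>x\<in>{0..1}. g2 (FF x) = x"
  proof
    fix x :: real assume x: "x \<in> {0..1}"
    show "g2 (FF x) = x"
    proof (cases "x = 1")
      case True then show ?thesis by (simp add: g2_def)
    next
      case False
      then have "FF x \<noteq> FF 1" using FF_inj[of x 1] x by auto
      then show ?thesis using sin_eq[of x] x False by (simp add: g2_def)
    qed
  qed
  then have "continuous_on (FF ` {0..1}) g2"
    by (intro continuous_on_inv FF_cont) auto
  then have "continuous_on (FF ` {0..<1}) g2"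
    by (rule continuous_on_subset) auto
  moreover have "\<And>y. y \<in> FF ` {0..<1} \<Longrightarrow> g2 y = sin_pq (6/5) (3/2) y"
    using FF_image by (auto simp: g2_def)
  ultimately show ?thesis
    using continuous_on_cong by fastforce
qed

lemma sin_deriv:
  assumes "0 \<le> s" "s < 1"
  shows "(sin_pq (6/5) (3/2) has_real_derivative inverse (ff s)) (at (FF s) within {0..<FF 1})"
proof -
  have d: "(FF has_derivative (*) (ff s)) (at s within {0..<1})"
    using FF_deriv_within[OF assms] by (simp add: has_field_derivative_def)
  have c: "continuous (at (FF s) within FF ` {0..<1}) (sin_pq (6/5) (3/2))"
  proof -
    have "FF s \<in> FF ` {0..<1}" using assms by auto
    then show ?thesis using sin_cont continuous_on_eq_continuous_within by blast
  qed
  have "(sin_pq (6/5) (3/2) has_derivative (*) (inverse (ff s))) (at (FF s) within FF ` {0..<1})"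
  proof (rule has_derivative_inverse_within[OF d c])
    show "s \<in> {0..<1}" using assms by auto
    show "linear ((*) (inverse (ff s)))" by (rule linear_times)
    show "(*) (inverse (ff s)) \<circ> (*) (ff s) = id"
      using ff_pos[OF assms] by (auto simp: fun_eq_iff)
    show "\<And>x. x \<in> {0..<1} \<Longrightarrow> sin_pq (6/5) (3/2) (FF x) = x"
      using sin_eq by auto
  qed
  then show ?thesis
    unfolding FF_image has_field_derivative_def by (simp add: mult.commute)
qed

lemma cos_eq:
  assumes "0 \<le> s" "s < 1"
  shows "cos_pq (6/5) (3/2) (FF s) = (1 - s powr (3/2)) powr (5/6)"
proof -
  have pi2: "pi_pq (6/5) (3/2) / 2 = FF 1" by (simp add: pi_pq_eq)
  have nb: "at (FF s) within {0..<FF 1} \<noteq> bot"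
  proof -
    have "FF s \<in> {0..FF 1}" using FF_mono_le[of 0 s] FF_mono_le[of s 1] FF0 assms by auto
    then have "FF s islimpt {0..<FF 1}" using FF1_pos by simp
    then show ?thesis using trivial_limit_within by blast
  qed
  have "cos_pq (6/5) (3/2) (FF s) = inverse (ff s)"
    unfolding cos_pq_def pi2
  proof (rule the_equality)
    show "(sin_pq (6/5) (3/2) has_real_derivative inverse (ff s)) (at (FF s) within {0..<FF 1})"
      by (rule sin_deriv[OF assms])
    fix c assume "(sin_pq (6/5) (3/2) has_real_derivative c) (at (FF s) within {0..<FF 1})"
    then show "c = inverse (ff s)"
      using has_field_derivative_unique[OF _ sin_deriv[OF assms] nb] by blast
  qed
  also have "\<dots> = (1 - s powr (3/2)) powr (5/6)"
    unfolding ff_def using pw_lt1[OF assms] by (simp add: powr_minus)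
  finally show ?thesis .
qed

lemma pow6_eq: "(0::real) \<le> A \<Longrightarrow> 0 \<le> B \<Longrightarrow> A^6 = B^6 \<Longrightarrow> A = B"
  by (rule power_eq_imp_eq_base) auto

lemma powr6: "0 < (x::real) \<Longrightarrow> (x powr r)^6 = x powr (6*r)"
  by (simp add: powr_power)

lemma p6a: "0 < (x::real) \<Longrightarrow> (x powr (-5/6))^6 = 1/x^5"
  by (simp add: powr6 powr_neg_numeral)
lemma p6b: "0 < (x::real) \<Longrightarrow> (x powr (-1/3))^6 = 1/x^2"
  by (simp add: powr6 powr_neg_numeral)
lemma p6c: "0 < (x::real) \<Longrightarrow> (x powr (-2/3))^6 = 1/x^4"
  by (simp add: powr6 powr_neg_numeral)
lemma p6d: "((2::real) powr (2/3))^6 = 16"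
  by (simp add: powr6)
lemma p6e: "((2::real) powr (-2/3))^6 = 1/16"
  by (simp add: powr6 powr_neg_numeral)

lemma identA:
  fixes v :: real
  assumes v: "0 < v" "v < 1"
  shows "ff (Theta v) * ((2/3) * (2 * v/(1+v)) powr (-1/3) * (2/(1+v)^2))
       = (2/3) * 2 powr (2/3) * (v powr (-1/3) * (1 - v^2) powr (-5/6))"
proof -
  define W where "W = 2 * v/(1+v)"
  have W: "0 < W" "W < 1" using v by (auto simp: W_def field_simps)
  have fT: "ff (Theta v) = (1 - W) powr (-5/6)"
    unfolding ff_def Theta_def W_def[symmetric] using W by (simp add: powr_powr)
  have v2: "0 < 1 - v^2" using v by (simp add: power_less_one_iff abs_less_iff)
  show ?thesis unfolding fT W_def[symmetric]
  proof (rule pow6_eq)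
    show "0 \<le> (1 - W) powr (-5/6) * ((2/3) * W powr (-1/3) * (2/(1+v)^2))" using v by simp
    show "0 \<le> (2/3) * 2 powr (2/3) * (v powr (-1/3) * (1 - v^2) powr (-5/6))" by simp
    have "((1 - W) powr (-5/6) * ((2/3) * W powr (-1/3) * (2/(1+v)^2)))^6
        = (1/(1-W)^5) * ((2/3)^6 * (1/W^2) * (2/(1+v)^2)^6)"
      using W by (simp only: power_mult_distrib p6a p6b diff_gt_0_iff_gt)
    also have "\<dots> = (2/3)^6 * 16 * (1/v^2 * (1/(1-v^2)^5))"
    proof -
      have e1: "1 - W = (1-v)/(1+v)" "1 - v^2 = (1-v)*(1+v)"
        using v by (auto simp: W_def field_simps power2_eq_square)
      have gen: "\<And>p q c. p \<noteq> 0 \<Longrightarrow> q \<noteq> 0 \<Longrightarrow> 1/(p/q)^5 * (c * (1/(2 * v/q)^2) * (2/q^2)^6)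
                    = c * 16 * (1/v^2 * (1/(p*q)^5))"
        using v by (simp add: field_simps power_mult_distrib power_divide)
      show ?thesis unfolding e1 unfolding W_def by (rule gen) (use v in auto)
    qed
    also have "\<dots> = ((2/3) * 2 powr (2/3) * (v powr (-1/3) * (1 - v^2) powr (-5/6)))^6"
      using v v2 by (simp only: power_mult_distrib p6a p6b p6d)
    finally show "((1 - W) powr (-5/6) * ((2/3) * W powr (-1/3) * (2/(1+v)^2)))^6
        = ((2/3) * 2 powr (2/3) * (v powr (-1/3) * (1 - v^2) powr (-5/6)))^6" .
  qed
qed

definition Rp :: "real \<Rightarrow> real" where "Rp z = z * (3 * z + 1)^3 * (1 - z)"
definition Dp :: "real \<Rightarrow> real" where "Dp z = 16 * z + (3 * z + 1)^3 * (1 - z)"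

lemma Phi_alt: "Phi z = 8 * sqrt (Rp z) / Dp z"
  by (simp add: Phi_def Rp_def Dp_def)

lemma Dp_pos: "0 \<le> z \<Longrightarrow> z \<le> 1 \<Longrightarrow> 0 < Dp z"
proof -
  assume z: "0 \<le> z" "z \<le> 1"
  have "0 \<le> (3 * z + 1)^3 * (1 - z)" using z by simp
  moreover have "0 < 16 * z \<or> 0 < (3 * z + 1)^3 * (1 - z)" using z by (cases "z = 0") auto
  moreover have "0 \<le> 16 * z" using z by simp
  ultimately show ?thesis unfolding Dp_def by linarith
qed

lemma Rp_nonneg: "0 \<le> z \<Longrightarrow> z \<le> 1 \<Longrightarrow> 0 \<le> Rp z"
  unfolding Rp_def by simp

lemma Rp_pos: "0 < z \<Longrightarrow> z < 1 \<Longrightarrow> 0 < Rp z"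
  unfolding Rp_def by simp

lemma DR_id: "(Dp z)^2 - 64 * Rp z = ((3 * z - 1)^3 * (z + 1))^2"
  unfolding Dp_def Rp_def by (simp add: algebra_simps eval_nat_numeral)

lemma Phi_sq: "0 \<le> z \<Longrightarrow> z \<le> 1 \<Longrightarrow> (Phi z)^2 = 64 * Rp z / (Dp z)^2"
  unfolding Phi_alt using Rp_nonneg[of z] by (simp add: power_divide power_mult_distrib)

lemma one_minus_Phi_sq: "0 \<le> z \<Longrightarrow> z \<le> 1 \<Longrightarrow> 1 - (Phi z)^2 = ((3 * z - 1)^3 * (z + 1) / Dp z)^2"
proof -
  assume z: "0 \<le> z" "z \<le> 1"
  have D: "Dp z \<noteq> 0" using Dp_pos[OF z] by simp
  have "1 - (Phi z)^2 = ((Dp z)^2 - 64 * Rp z) / (Dp z)^2"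
    using Phi_sq[OF z] D by (simp add: field_simps)
  then show ?thesis unfolding DR_id by (simp add: power_divide)
qed

lemma Phi_nonneg: "0 \<le> z \<Longrightarrow> z \<le> 1 \<Longrightarrow> 0 \<le> Phi z"
  unfolding Phi_alt using Dp_pos[of z] Rp_nonneg[of z] by simp

lemma Phi_pos: "0 < z \<Longrightarrow> z < 1 \<Longrightarrow> 0 < Phi z"
  unfolding Phi_alt using Dp_pos[of z] Rp_pos[of z] by simp

lemma Phi_le1: "0 \<le> z \<Longrightarrow> z \<le> 1 \<Longrightarrow> Phi z \<le> 1"
proof -
  assume z: "0 \<le> z" "z \<le> 1"
  have "0 \<le> 1 - (Phi z)^2" unfolding one_minus_Phi_sq[OF z] by simp
  then have "(Phi z)^2 \<le> 1^2" by simp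
  then show ?thesis by (rule power2_le_imp_le) simp
qed

lemma Phi_lt1: "0 \<le> z \<Longrightarrow> z \<le> 1 \<Longrightarrow> z \<noteq> 1/3 \<Longrightarrow> Phi z < 1"
proof -
  assume z: "0 \<le> z" "z \<le> 1" "z \<noteq> 1/3"
  have "3 * z - 1 \<noteq> 0" using z by auto
  then have "0 < 1 - (Phi z)^2" unfolding one_minus_Phi_sq[OF z(1,2)] using z Dp_pos[of z] by simp
  then have "(Phi z)^2 < 1^2" by simp
  then show ?thesis by (rule power2_less_imp_less) simp
qed

lemma Phi_third: "Phi (1/3) = 1"
proof -
  have "sqrt (16/9) = 4/3" by (simp add: real_sqrt_divide)
  then show ?thesis unfolding Phi_def by simp
qed

lemma Phi_one: "Phi 1 = 0" unfolding Phi_def by simp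

lemma Theta_range: "0 \<le> v \<Longrightarrow> v \<le> 1 \<Longrightarrow> 0 \<le> Theta v \<and> Theta v \<le> 1"
proof -
  assume v: "0 \<le> v" "v \<le> 1"
  have "0 \<le> 2 * v / (1 + v)" "2 * v / (1 + v) \<le> 1" using v by (auto simp: field_simps)
  then show ?thesis unfolding Theta_def using powr_mono2[of "2/3" "2 * v / (1 + v)" 1] by auto
qed

lemma Theta_lt1: "0 \<le> v \<Longrightarrow> v < 1 \<Longrightarrow> Theta v < 1"
proof -
  assume v: "0 \<le> v" "v < 1"
  have "0 \<le> 2 * v / (1 + v)" "2 * v / (1 + v) < 1" using v by (auto simp: field_simps)
  then show ?thesis unfolding Theta_def using powr_less_mono2[of "2/3" "2 * v / (1 + v)" 1] by auto
qed

lemma Theta_zero: "Theta 0 = 0" unfolding Theta_def by simp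
lemma Theta_one: "Theta 1 = 1" unfolding Theta_def by simp

definition Pd :: "real \<Rightarrow> real" where
  "Pd z = - (4 * (1 + z) * (3 * z + 1)^2 * (3 * z - 1)^5 / ((Dp z)^2 * sqrt (Rp z)))"

lemma identB:
  fixes z :: real
  assumes z: "1/3 < z" "z < 1"
  shows "(Phi z) powr (-1/3) * (1 - (Phi z)^2) powr (-5/6) * Pd z
       = -2 * (z powr (-2/3) * (1 - z^2) powr (-2/3))"
proof -
  have z01: "0 \<le> z" "z \<le> 1" using z by auto
  define v where "v = Phi z"
  define D where "D = Dp z"
  define R where "R = Rp z"
  define p where "p = 3 * z - 1"
  define q where "q = 1 + z"
  define r where "r = 3 * z + 1"
  have pos: "0 < v" "0 < D" "0 < R" "0 < p" "0 < q" "0 < r" "0 < 1 - z"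
    using Phi_pos[of z] Dp_pos[OF z01] Rp_pos[of z] z
    by (auto simp: v_def D_def R_def p_def q_def r_def)
  have v2: "v^2 = 64 * R / D^2" using Phi_sq[OF z01] by (simp add: v_def R_def D_def)
  have omv: "1 - v^2 = (p^3 * q / D)^2"
    using one_minus_Phi_sq[OF z01] by (simp add: v_def p_def q_def D_def add.commute)
  have omv_pos: "0 < 1 - v^2" unfolding omv using pos by simp
  define y where "y = 1 - z"
  have ypos: "0 < y" using z by (simp add: y_def)
  have Rr: "R = z * r^3 * y" by (simp add: R_def Rp_def r_def y_def)
  have omz: "1 - z^2 = y * q" by (simp add: q_def y_def algebra_simps power2_eq_square)
  have omz_pos: "0 < 1 - z^2" unfolding omz using pos ypos by simp
  have Pd': "- Pd z = 4 * q * r^2 * p^5 / (D^2 * sqrt R)"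
    by (simp add: Pd_def q_def r_def p_def D_def R_def)
  have "- (v powr (-1/3) * (1 - v^2) powr (-5/6) * Pd z) = - (-2 * (z powr (-2/3) * (1 - z^2) powr (-2/3)))"
  proof (rule pow6_eq)
    show "0 \<le> - (v powr (-1/3) * (1 - v^2) powr (-5/6) * Pd z)"
      unfolding minus_mult_right Pd' using pos by simp
    show "0 \<le> - (-2 * (z powr (-2/3) * (1 - z^2) powr (-2/3)))" by simp
    have sR: "(sqrt R)^6 = R^3"
    proof -
      have "(sqrt R)^6 = ((sqrt R)^2)^3" by (simp add: power_mult[symmetric])
      then show ?thesis using pos by simp
    qed
    have "(- (v powr (-1/3) * (1 - v^2) powr (-5/6) * Pd z))^6
        = (v powr (-1/3))^6 * ((1 - v^2) powr (-5/6))^6 * (4 * q * r^2 * p^5)^6 / (D^12 * (sqrt R)^6)"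
      unfolding minus_mult_right Pd' by (simp add: power_mult_distrib power_divide)
    also have "\<dots> = 1/v^2 * (1/(1-v^2)^5) * (4 * q * r^2 * p^5)^6 / (D^12 * R^3)"
      unfolding sR using pos omv_pos by (simp only: p6a p6b)
    also have "\<dots> = 1/(64 * R / D^2) * (1/((p^3 * q / D)^2)^5) * (4 * q * r^2 * p^5)^6 / (D^12 * R^3)"
      unfolding omv unfolding v2 ..
    also have "\<dots> = 64 * r^12 / (q^4 * R^4)"
      using pos by (simp add: field_simps power_mult_distrib power_divide eval_nat_numeral)
    also have "\<dots> = 2^6 * (1/z^4 * (1/(y * q)^4))"
      unfolding Rr using pos ypos z by (simp add: field_simps power_mult_distrib eval_nat_numeral)
    also have "\<dots> = (- (-2 * (z powr (-2/3) * (1 - z^2) powr (-2/3))))^6"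
      unfolding omz using pos ypos z by (simp only: minus_mult_left minus_minus power_mult_distrib p6c mult_pos_pos)
    finally show "(- (v powr (-1/3) * (1 - v^2) powr (-5/6) * Pd z))^6 = (- (-2 * (z powr (-2/3) * (1 - z^2) powr (-2/3))))^6" .
  qed
  then show ?thesis by (simp add: v_def)
qed

definition aa :: "real \<Rightarrow> real" where "aa s = sqrt (1 - s powr (3/2))"
definition zz :: "real \<Rightarrow> real" where "zz s = 2 * aa s / (1 + (aa s)^2)"
definition zd :: "real \<Rightarrow> real" where
  "zd s = - ((3/2) * s powr (1/2) * s powr (3/2) / (aa s * (1 + (aa s)^2)^2))"

lemma aa_sq: "0 \<le> s \<Longrightarrow> s \<le> 1 \<Longrightarrow> (aa s)^2 = 1 - s powr (3/2)"
  unfolding aa_def using pw_le_t[of s] by simp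

lemma aa_pos: "0 \<le> s \<Longrightarrow> s < 1 \<Longrightarrow> 0 < aa s"
  unfolding aa_def using pw_lt1[of s] by simp

lemma aa_le1: "0 \<le> s \<Longrightarrow> aa s \<le> 1"
  unfolding aa_def by simp

lemma identC:
  fixes s :: real
  assumes s: "0 < s" "s < 1"
  shows "(zz s) powr (-2/3) * (1 - (zz s)^2) powr (-2/3) * zd s = - ((3/2) * 2 powr (-2/3) * ff s)"
proof -
  define a where "a = aa s"
  define w where "w = s powr (3/2)"
  define sp where "sp = s powr (1/2)"
  have a: "0 < a" "a^2 = 1 - w" using aa_pos[of s] aa_sq[of s] s by (auto simp: a_def w_def)
  have wpos: "0 < w" using s by (simp add: w_def)
  have spos: "0 < sp" using s by (simp add: sp_def)
  have sp6: "sp^6 = w^2"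
  proof -
    have "sp^6 = s powr 3" using s by (simp add: sp_def powr6)
    moreover have "w^2 = s powr 3" using s by (simp add: w_def powr_power)
    ultimately show ?thesis by simp
  qed
  have z: "zz s = 2 * a / (1 + a^2)" by (simp add: zz_def a_def)
  have a1: "0 < 1 + a^2" by (simp add: add_pos_nonneg)
  have omz: "1 - (zz s)^2 = w^2 / (1 + a^2)^2"
  proof -
    have w_eq: "w = 1 - a^2" using a by simp
    have a1': "1 + a^2 \<noteq> 0" using a1 by simp
    show ?thesis unfolding z w_eq using a1'
      by (simp add: field_simps) (simp add: algebra_simps eval_nat_numeral)
  qed
  have zpos: "0 < zz s" unfolding z using a a1 by simp
  have omzpos: "0 < 1 - (zz s)^2" unfolding omz using wpos a1 by simp
  have ffs: "ff s = (a^2) powr (-5/6)" unfolding ff_def a(2) w_def ..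
  have zd': "- zd s = (3/2) * sp * w / (a * (1 + a^2)^2)"
    by (simp add: zd_def a_def sp_def w_def)
  have "- ((zz s) powr (-2/3) * (1 - (zz s)^2) powr (-2/3) * zd s) = (3/2) * 2 powr (-2/3) * ff s"
  proof (rule pow6_eq)
    show "0 \<le> - ((zz s) powr (-2/3) * (1 - (zz s)^2) powr (-2/3) * zd s)"
      unfolding minus_mult_right zd' using a wpos spos a1 by simp
    show "0 \<le> (3/2) * 2 powr (-2/3) * ff s" using ff_pos[of s] s by simp
    have "(- ((zz s) powr (-2/3) * (1 - (zz s)^2) powr (-2/3) * zd s))^6
        = 1/(zz s)^4 * (1/(1 - (zz s)^2)^4) * ((3/2)^6 * sp^6 * w^6 / (a^6 * ((1 + a^2)^2)^6))"
      unfolding minus_mult_right zd' using zpos omzpos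
      by (simp only: power_mult_distrib power_divide p6c)
    also have "\<dots> = 1/(2 * a / (1 + a^2))^4 * (1/(w^2 / (1 + a^2)^2)^4) * ((3/2)^6 * w^2 * w^6 / (a^6 * ((1 + a^2)^2)^6))"
      unfolding omz sp6 unfolding z ..
    also have "\<dots> = (3/2)^6 / 16 * (1 / (a^2)^5)"
    proof -
      have gen: "\<And>b c. a \<noteq> 0 \<Longrightarrow> w \<noteq> 0 \<Longrightarrow> b \<noteq> 0 \<Longrightarrow>
         1/(2 * a / b)^4 * (1/(w^2 / b^2)^4) * (c * w^2 * w^6 / (a^6 * (b^2)^6)) = c / 16 * (1 / (a^2)^5)"
        by (simp add: field_simps power_mult_distrib power_divide)
      show ?thesis by (rule gen) (use a wpos a1 in auto)
    qed
    also have "\<dots> = ((3/2) * 2 powr (-2/3) * ff s)^6"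
      unfolding ffs using p6a[of "a^2"] a(1) by (simp only: power_mult_distrib p6e zero_less_power)
    finally show "(- ((zz s) powr (-2/3) * (1 - (zz s)^2) powr (-2/3) * zd s))^6 = ((3/2) * 2 powr (-2/3) * ff s)^6" .
  qed
  then show ?thesis by simp
qed

definition Rd :: "real \<Rightarrow> real" where
  "Rd z = (3 * z + 1)^3 * (1 - z) + 9 * z * (3 * z + 1)^2 * (1 - z) - z * (3 * z + 1)^3"
definition Dd :: "real \<Rightarrow> real" where
  "Dd z = 16 + 9 * (3 * z + 1)^2 * (1 - z) - (3 * z + 1)^3"

lemma RD_poly: "Rd z * Dp z - 2 * Rp z * Dd z = - ((1 + z) * (3 * z + 1)^2 * (3 * z - 1)^5)"
  unfolding Rd_def Dp_def Rp_def Dd_def by (simp add: algebra_simps eval_nat_numeral)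

lemma dRp: "(Rp has_real_derivative Rd z) (at z)"
proof -
  have "((\<lambda>z. z * (3 * z + 1)^3 * (1 - z)) has_real_derivative Rd z) (at z)"
    unfolding Rd_def
    by (rule derivative_eq_intros refl | simp)+ (simp add: algebra_simps eval_nat_numeral)
  then show ?thesis unfolding Rp_def[abs_def] .
qed

lemma dDp: "(Dp has_real_derivative Dd z) (at z)"
proof -
  have "((\<lambda>z. 16 * z + (3 * z + 1)^3 * (1 - z)) has_real_derivative Dd z) (at z)"
    unfolding Dd_def
    by (rule derivative_eq_intros refl | simp)+
  then show ?thesis unfolding Dp_def[abs_def] .
qed

lemma dPhi:
  assumes z: "0 < z" "z < 1"
  shows "(Phi has_real_derivative Pd z) (at z)"
proof -
  have R: "0 < Rp z" using Rp_pos[OF z] .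
  have D: "0 < Dp z" using Dp_pos[of z] z by simp
  have ph: "Phi = (\<lambda>z. 8 * sqrt (Rp z) / Dp z)" using Phi_alt by auto
  have "((\<lambda>z. 8 * sqrt (Rp z) / Dp z) has_real_derivative
      ((8 * (inverse (sqrt (Rp z)) / 2 * Rd z)) * Dp z - 8 * sqrt (Rp z) * Dd z) / (Dp z * Dp z)) (at z)"
    by (intro DERIV_divide DERIV_cmult DERIV_chain2[OF DERIV_real_sqrt[OF R] dRp] dDp) (use D in simp)
  moreover have "((8 * (inverse (sqrt (Rp z)) / 2 * Rd z)) * Dp z - 8 * sqrt (Rp z) * Dd z) / (Dp z * Dp z) = Pd z"
  proof -
    have sR: "sqrt (Rp z) * sqrt (Rp z) = Rp z" using R by simp
    have sRpos: "0 < sqrt (Rp z)" using R by simp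
    have "((8 * (inverse (sqrt (Rp z)) / 2 * Rd z)) * Dp z - 8 * sqrt (Rp z) * Dd z) / (Dp z * Dp z)
        = 4 * (Rd z * Dp z - 2 * (sqrt (Rp z) * sqrt (Rp z)) * Dd z) / ((Dp z)^2 * sqrt (Rp z))"
      using sRpos D by (simp add: field_simps power2_eq_square)
    also have "\<dots> = Pd z" unfolding sR RD_poly Pd_def by simp
    finally show ?thesis .
  qed
  ultimately show ?thesis unfolding ph by simp
qed

lemma dTheta:
  assumes v: "0 < v"
  shows "(Theta has_real_derivative (2/3) * (2 * v / (1 + v)) powr (-1/3) * (2 / (1 + v)^2)) (at v)"
proof -
  have W: "0 < 2 * v / (1 + v)" using v by simp
  have "((\<lambda>v. 2 * v / (1 + v)) has_real_derivative 2 / (1 + v)^2) (at v)"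
    using v by (auto intro!: derivative_eq_intros simp: field_simps power2_eq_square)
  from DERIV_chain2[OF has_real_derivative_powr[OF W, of "2/3"] this]
  show ?thesis unfolding Theta_def[abs_def] by simp
qed

lemma dzz:
  assumes s: "0 < s" "s < 1"
  shows "(zz has_real_derivative zd s) (at s)"
proof -
  have w1: "0 < 1 - s powr (3/2)" using pw_lt1[of s] s by simp
  have hw: "((\<lambda>s. s powr (3/2)) has_real_derivative (3/2) * s powr (1/2)) (at s)"
    using has_real_derivative_powr[OF s(1), of "3/2"] by simp
  have ha: "(aa has_real_derivative (inverse (sqrt (1 - s powr (3/2))) / 2 * (0 - (3/2) * s powr (1/2)))) (at s)"
    unfolding aa_def[abs_def]
    by (rule DERIV_chain2[where g = "\<lambda>s. 1 - s powr (3/2)", OF DERIV_real_sqrt[OF w1]]) (intro DERIV_diff DERIV_const hw)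
  define a where "a = aa s"
  define a' where "a' = inverse (sqrt (1 - s powr (3/2))) / 2 * (0 - (3/2) * s powr (1/2))"
  have apos: "0 < a" using aa_pos[of s] s by (simp add: a_def)
  have "0 \<le> a^2" by simp
  then have a1: "1 + a^2 \<noteq> 0" by linarith
  have "(zz has_real_derivative (2 * a' * (1 + a^2) - 2 * a * (2 * a * a')) / ((1 + a^2) * (1 + a^2))) (at s)"
  proof -
    have ha': "(aa has_real_derivative a') (at s)" using ha by (simp add: a'_def)
    have hsq: "((\<lambda>x. (aa x)^2) has_real_derivative 2 * a * a') (at s)"
      using DERIV_power[OF ha', of 2] by (simp add: a_def mult.commute mult.left_commute)
    have hden: "((\<lambda>x. 1 + (aa x)^2) has_real_derivative 2 * a * a') (at s)"
      using DERIV_add[OF DERIV_const hsq] by simp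
    have hnum: "((\<lambda>x. 2 * aa x) has_real_derivative 2 * a') (at s)"
      using DERIV_cmult[OF ha', of 2] by simp
    show ?thesis unfolding zz_def[abs_def]
      using DERIV_divide[OF hnum hden] a1 by (simp add: a_def)
  qed
  moreover have "(2 * a' * (1 + a^2) - 2 * a * (2 * a * a')) / ((1 + a^2) * (1 + a^2)) = zd s"
  proof -
    have sq: "a^2 = 1 - s powr (3/2)" using aa_sq[of s] s by (simp add: a_def)
    have a'': "a' = - ((3/2) * s powr (1/2) / (2 * a))"
      by (simp add: a'_def a_def aa_def field_simps)
    have "(2 * a' * (1 + a^2) - 2 * a * (2 * a * a')) / ((1 + a^2) * (1 + a^2)) = 2 * a' * (1 - a^2) / (1 + a^2)^2"
      using a1 by (simp add: field_simps power2_eq_square)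
    also have "\<dots> = zd s"
    proof -
      have omsq: "1 - a^2 = s powr (3/2)" using sq by simp
      show ?thesis unfolding zd_def a_def[symmetric] a'' omsq
        using apos a1 by (simp add: field_simps)
    qed
    finally show ?thesis .
  qed
  ultimately show ?thesis by simp
qed

definition GG :: "real \<Rightarrow> real" where "GG s = Theta (Phi (zz s))"
definition a1c :: real where "a1c = 3 - 2 * sqrt 2"
definition w1 :: real where "w1 = 1 - a1c^2"
definition s1 :: real where "s1 = w1 powr (2/3)"

lemma sqrt2_bounds: "4/3 < sqrt (2::real)" "sqrt (2::real) < 17/12"
proof -
  have "sqrt ((4/3)^2) < sqrt (2::real)" by (intro real_sqrt_less_mono) (simp add: power2_eq_square)
  then show "4/3 < sqrt (2::real)" by simp
  have "sqrt (2::real) < sqrt ((17/12)^2)" by (intro real_sqrt_less_mono) (simp add: power2_eq_square)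
  then show "sqrt (2::real) < 17/12" by simp
qed

lemma a1c_sq: "a1c^2 = 17 - 12 * sqrt 2"
  unfolding a1c_def by (simp add: power2_eq_square algebra_simps)

lemma a1c_bounds: "0 < a1c" "a1c < 1"
  using sqrt2_bounds unfolding a1c_def by auto

lemma w1_bounds: "0 < w1" "w1 < 1"
  using sqrt2_bounds unfolding w1_def a1c_sq by auto

lemma s1_bounds: "0 < s1" "s1 < 1"
proof -
  show "0 < s1" using w1_bounds unfolding s1_def by simp
  have "w1 powr (2/3) < 1 powr (2/3)" using w1_bounds by (intro powr_less_mono2) auto
  then show "s1 < 1" unfolding s1_def by simp
qed

lemma s1_pow: "s1 powr (3/2) = w1"
  using w1_bounds unfolding s1_def by (simp add: powr_powr)

lemma aa_s1: "aa s1 = a1c"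
  unfolding aa_def s1_pow w1_def using a1c_bounds by simp

lemma zz_s1: "zz s1 = 1/3"
proof -
  have "a1c^2 - 6 * a1c + 1 = 0" unfolding a1c_sq by (simp add: a1c_def)
  then have "6 * a1c = 1 + a1c^2" by simp
  moreover have "0 < 1 + a1c^2" by (simp add: add_pos_nonneg)
  ultimately show ?thesis unfolding zz_def aa_s1 by (simp add: field_simps)
qed

lemma zz_pos: "0 \<le> s \<Longrightarrow> s < 1 \<Longrightarrow> 0 < zz s"
  unfolding zz_def using aa_pos[of s] by (simp add: add_pos_nonneg)

lemma zz_le1: "0 \<le> s \<Longrightarrow> s < 1 \<Longrightarrow> zz s \<le> 1"
proof -
  assume s: "0 \<le> s" "s < 1"
  have "0 \<le> (aa s - 1)^2" by simp
  then have "2 * aa s \<le> 1 + (aa s)^2" by (simp add: power2_eq_square algebra_simps)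
  moreover have "0 < 1 + (aa s)^2" by (simp add: add_pos_nonneg)
  ultimately show ?thesis unfolding zz_def by simp
qed

lemma zz_lt1: "0 < s \<Longrightarrow> s < 1 \<Longrightarrow> zz s < 1"
proof -
  assume s: "0 < s" "s < 1"
  have "(aa s)^2 < 1" using aa_sq[of s] s by simp
  then have "aa s \<noteq> 1" by auto
  then have "0 < (aa s - 1)^2" by simp
  then have "2 * aa s < 1 + (aa s)^2" by (simp add: power2_eq_square algebra_simps)
  moreover have "0 < 1 + (aa s)^2" by (simp add: add_pos_nonneg)
  ultimately show ?thesis unfolding zz_def by simp
qed

lemma zz_gt_third:
  assumes s: "0 \<le> s" "s < s1"
  shows "1/3 < zz s"
proof -
  have s1': "s < 1" using s s1_bounds by simp
  have "s powr (3/2) < s1 powr (3/2)" using s by (intro powr_less_mono2) auto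
  then have "s powr (3/2) < w1" by (simp add: s1_pow)
  then have "sqrt (1 - w1) < aa s" unfolding aa_def by (intro real_sqrt_less_mono) simp
  then have lt: "a1c < aa s" unfolding w1_def using a1c_bounds by simp
  have le: "aa s \<le> 1" using aa_le1 s by simp
  have "0 < (aa s - a1c) * ((3 + 2 * sqrt 2) - aa s)"
    using lt le sqrt2_bounds by (intro mult_pos_pos) auto
  also have "(aa s - a1c) * ((3 + 2 * sqrt 2) - aa s) = 6 * aa s - 1 - (aa s)^2"
    unfolding a1c_def by (simp add: algebra_simps power2_eq_square)
  finally have "1 + (aa s)^2 < 6 * aa s" by simp
  moreover have "0 < 1 + (aa s)^2" by (simp add: add_pos_nonneg)
  ultimately show ?thesis unfolding zz_def by (simp add: field_simps)
qed

lemma cont_zz: "continuous_on {0..<1} zz"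
proof -
  have c1: "continuous_on {0..<1} (\<lambda>x::real. x powr (3/2))"
    by (intro continuous_on_powr' continuous_intros) auto
  have c2: "continuous_on {0..<1} aa"
    unfolding aa_def[abs_def] by (intro continuous_intros c1)
  have "\<And>x. 1 + (aa x)^2 \<noteq> 0"
  proof -
    fix x have "0 \<le> (aa x)^2" by simp
    then show "1 + (aa x)^2 \<noteq> 0" by linarith
  qed
  then show ?thesis
    unfolding zz_def[abs_def] by (intro continuous_intros c2) auto
qed

lemma cont_Phi: "continuous_on {0..1} Phi"
proof -
  have ph: "Phi = (\<lambda>z. 8 * sqrt (Rp z) / Dp z)" using Phi_alt by auto
  show ?thesis unfolding ph
    unfolding Rp_def[abs_def] Dp_def[abs_def]
    by (intro continuous_intros) (use Dp_pos in \<open>fastforce simp: Dp_def\<close>)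
qed

lemma cont_Theta: "continuous_on {0..1} Theta"
  unfolding Theta_def[abs_def]
  by (intro continuous_on_powr' continuous_intros) (auto simp: add_nonneg_eq_0_iff)

lemma GG_range: "0 \<le> s \<Longrightarrow> s < 1 \<Longrightarrow> 0 \<le> GG s \<and> GG s \<le> 1"
proof -
  assume s: "0 \<le> s" "s < 1"
  have z: "0 \<le> zz s" "zz s \<le> 1" using zz_pos[OF s] zz_le1[OF s] by auto
  have v: "0 \<le> Phi (zz s)" "Phi (zz s) \<le> 1" using Phi_nonneg[OF z] Phi_le1[OF z] by auto
  show ?thesis unfolding GG_def by (rule Theta_range[OF v])
qed

lemma cont_GG: "continuous_on {0..s1} GG"
proof -
  have zc: "continuous_on {0..s1} zz"
    by (rule continuous_on_subset[OF cont_zz]) (use s1_bounds in auto)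
  have zi: "zz ` {0..s1} \<subseteq> {0..1}"
  proof (rule image_subsetI)
    fix x assume "x \<in> {0..s1}"
    then have x: "0 \<le> x" "x < 1" using s1_bounds by auto
    show "zz x \<in> {0..1}" using zz_pos[OF x] zz_le1[OF x] by auto
  qed
  have pc: "continuous_on {0..s1} (\<lambda>s. Phi (zz s))"
    by (rule continuous_on_compose2[OF cont_Phi zc zi])
  have pi: "(\<lambda>s. Phi (zz s)) ` {0..s1} \<subseteq> {0..1}"
  proof (rule image_subsetI)
    fix x assume "x \<in> {0..s1}"
    then have "zz x \<in> {0..1}" using zi by blast
    then have x: "0 \<le> zz x" "zz x \<le> 1" by auto
    show "Phi (zz x) \<in> {0..1}" using Phi_nonneg[OF x] Phi_le1[OF x] by auto
  qed
  show ?thesis unfolding GG_def[abs_def]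
    by (rule continuous_on_compose2[OF cont_Theta pc pi])
qed

lemma GG_deriv_ident:
  assumes s: "0 < s" "s < s1"
  shows "(GG has_real_derivative (2/3) * (2 * Phi (zz s) / (1 + Phi (zz s))) powr (-1/3) * (2 / (1 + Phi (zz s))^2) * (Pd (zz s) * zd s)) (at s)"
    and "ff (GG s) * ((2/3) * (2 * Phi (zz s) / (1 + Phi (zz s))) powr (-1/3) * (2 / (1 + Phi (zz s))^2) * (Pd (zz s) * zd s)) = 2 * ff s"
proof -
  have s01: "0 < s" "s < 1" using s s1_bounds by auto
  define z where "z = zz s"
  define v where "v = Phi z"
  have z: "1/3 < z" "z < 1" using zz_gt_third[of s] zz_lt1[of s] s s01 by (auto simp: z_def)
  have v: "0 < v" "v < 1" using Phi_pos[of z] Phi_lt1[of z] z by (auto simp: v_def)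
  show "(GG has_real_derivative (2/3) * (2 * Phi (zz s) / (1 + Phi (zz s))) powr (-1/3) * (2 / (1 + Phi (zz s))^2) * (Pd (zz s) * zd s)) (at s)"
    unfolding GG_def[abs_def]
    using DERIV_chain2[OF dTheta[OF v(1)[unfolded v_def z_def]] DERIV_chain2[OF dPhi dzz[OF s01]]] z
    by (simp add: z_def)
  have A: "ff (Theta v) * ((2/3) * (2 * v / (1 + v)) powr (-1/3) * (2 / (1 + v)^2))
       = (2/3) * 2 powr (2/3) * (v powr (-1/3) * (1 - v^2) powr (-5/6))" by (rule identA[OF v])
  have B: "v powr (-1/3) * (1 - v^2) powr (-5/6) * Pd z = -2 * (z powr (-2/3) * (1 - z^2) powr (-2/3))"
    unfolding v_def by (rule identB[OF z])
  have C: "z powr (-2/3) * (1 - z^2) powr (-2/3) * zd s = - ((3/2) * 2 powr (-2/3) * ff s)"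
    unfolding z_def by (rule identC[OF s01])
  have k: "2 powr (2/3) * 2 powr (-2/3) = (1::real)" by (simp add: powr_add[symmetric])
  have "ff (Theta v) * ((2/3) * (2 * v / (1 + v)) powr (-1/3) * (2 / (1 + v)^2) * (Pd z * zd s))
      = (ff (Theta v) * ((2/3) * (2 * v / (1 + v)) powr (-1/3) * (2 / (1 + v)^2))) * Pd z * zd s"
    by (simp add: mult.assoc)
  also have "\<dots> = (2/3) * 2 powr (2/3) * (v powr (-1/3) * (1 - v^2) powr (-5/6) * Pd z) * zd s"
    unfolding A by (simp add: mult.assoc)
  also have "\<dots> = (2/3) * 2 powr (2/3) * (-2) * (z powr (-2/3) * (1 - z^2) powr (-2/3) * zd s)"
    unfolding B by (simp add: mult.assoc)
  also have "\<dots> = 2 * (2 powr (2/3) * 2 powr (-2/3)) * ff s"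
    unfolding C by (simp add: algebra_simps)
  also have "\<dots> = 2 * ff s" unfolding k by simp
  finally show "ff (GG s) * ((2/3) * (2 * Phi (zz s) / (1 + Phi (zz s))) powr (-1/3) * (2 / (1 + Phi (zz s))^2) * (Pd (zz s) * zd s)) = 2 * ff s"
    by (simp add: GG_def v_def z_def)
qed

lemma main_ident:
  assumes s: "0 \<le> s" "s \<le> s1"
  shows "FF (GG s) = 2 * FF s"
proof -
  define H where "H s = FF (GG s) - 2 * FF s" for s
  have "H s = H 0"
  proof (rule DERIV_isconst2[of 0 s1 H])
    show "0 < s1" using s1_bounds by simp
    show "0 \<le> s" "s \<le> s1" using s by auto
    have gi: "GG ` {0..s1} \<subseteq> {0..1}"
    proof (rule image_subsetI)
      fix x assume "x \<in> {0..s1}"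
      then have x: "0 \<le> x" "x < 1" using s1_bounds by auto
      show "GG x \<in> {0..1}" using GG_range[OF x] by auto
    qed
    have c1: "continuous_on {0..s1} (\<lambda>s. FF (GG s))"
      by (rule continuous_on_compose2[OF FF_cont cont_GG gi])
    have c2: "continuous_on {0..s1} FF"
      by (rule continuous_on_subset[OF FF_cont]) (use s1_bounds in auto)
    show "continuous_on {0..s1} H" unfolding H_def[abs_def]
      by (intro continuous_intros c1 c2)
    fix x assume x: "0 < x" "x < s1"
    have x1: "x < 1" using x s1_bounds by simp
    have g: "0 < GG x" "GG x < 1"
    proof -
      have z: "1/3 < zz x" "zz x < 1" using zz_gt_third[of x] zz_lt1[of x] x x1 by auto
      have v: "0 < Phi (zz x)" "Phi (zz x) < 1" using Phi_pos[of "zz x"] Phi_lt1[of "zz x"] z by auto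
      show "GG x < 1" unfolding GG_def using Theta_lt1[of "Phi (zz x)"] v by simp
      show "0 < GG x" unfolding GG_def Theta_def using v by simp
    qed
    have "(H has_real_derivative ff (GG x) * ((2/3) * (2 * Phi (zz x) / (1 + Phi (zz x))) powr (-1/3) * (2 / (1 + Phi (zz x))^2) * (Pd (zz x) * zd x)) - 2 * ff x) (at x)"
      unfolding H_def[abs_def]
      by (intro DERIV_diff DERIV_cmult DERIV_chain2[OF FF_deriv_at[OF g] GG_deriv_ident(1)[OF x]] FF_deriv_at[OF x(1) x1])
    then show "(H has_real_derivative 0) (at x)"
      using GG_deriv_ident(2)[OF x] by simp
  qed
  moreover have "H 0 = 0"
  proof -
    have "aa 0 = 1" by (simp add: aa_def)
    then have "zz 0 = 1" by (simp add: zz_def)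
    then have "GG 0 = 0" by (simp add: GG_def Phi_one Theta_zero)
    then show ?thesis by (simp add: H_def FF0)
  qed
  ultimately show ?thesis by (simp add: H_def)
qed

lemma Psi_cos:
  assumes s: "0 \<le> s" "s < 1"
  shows "Psi ((1 - s powr (3/2)) powr (5/6)) = zz s"
proof -
  have w: "0 < 1 - s powr (3/2)" using pw_lt1[OF s] by simp
  have e1: "((1 - s powr (3/2)) powr (5/6)) powr (3/5) = aa s"
    unfolding aa_def powr_powr using w by (simp add: powr_half_sqrt)
  have e2: "((1 - s powr (3/2)) powr (5/6)) powr (6/5) = (aa s)^2"
    unfolding powr_powr using w aa_sq[of s] s by simp
  show ?thesis unfolding Psi_def e1 e2 zz_def ..
qed

theorem theorem4p4:
  fixes x :: real
  assumes "0 \<le> x" and "x < pi_pq (6/5) (3/2) / 4"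
  shows "sin_pq (6/5) (3/2) (2 * x) = (Theta \<circ> Phi \<circ> Psi) (cos_pq (6/5) (3/2) x)"
proof -
  have xl: "x < FF 1 / 2" using assms(2) by (simp add: pi_pq_eq)
  have x1: "x < FF 1" using xl FF1_pos by simp
  obtain s where s: "0 \<le> s" "s < 1" "FF s = x" using FF_surj[OF assms(1) x1] by auto
  have GGs1: "GG s1 = 1" by (simp add: GG_def zz_s1 Phi_third Theta_one)
  have Fs1: "FF s1 = FF 1 / 2" using main_ident[of s1] s1_bounds GGs1 by simp
  have ss1: "s < s1"
  proof (rule ccontr)
    assume "\<not> s < s1"
    then have "FF s1 \<le> FF s" using FF_mono_le[of s1 s] s s1_bounds by simp
    then show False using Fs1 s xl by simp
  qed
  have e2x: "FF (GG s) = 2 * x" using main_ident[of s] s ss1 by simp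
  have z: "1/3 < zz s" "zz s \<le> 1" "0 \<le> zz s" using zz_gt_third[OF s(1) ss1] zz_le1[OF s(1,2)] by auto
  have v: "0 \<le> Phi (zz s)" "Phi (zz s) < 1" using Phi_nonneg[of "zz s"] Phi_lt1[of "zz s"] z by auto
  have g: "0 \<le> GG s" "GG s < 1" using GG_range[OF s(1,2)] Theta_lt1[OF v] by (auto simp: GG_def)
  have "sin_pq (6/5) (3/2) (2 * x) = GG s" using sin_eq[OF g] e2x by simp
  moreover have "cos_pq (6/5) (3/2) x = (1 - s powr (3/2)) powr (5/6)" using cos_eq[OF s(1,2)] s by simp
  ultimately show ?thesis using Psi_cos[OF s(1,2)] by (simp add: GG_def)
qed

end
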